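(* Let $K\subseteq[0,1]^n$ be compact and $\epsilon>0$. If $t\ge \log(8n)/(2\epsilon^2)$, then for every $p\in K$ and every measurable set $A\subseteq[0,1]^n$, $$\mathbb{P}_p[Y_{t,\epsilon}\in A]\le 2\,\mathbb{P}_p[\bar X_t\in A].$$
   Context: For $p\in[0,1]^n$, let $X_1,X_2,\dots$ be i.i.d. random vectors in $\{0,1\}^n$ whose coordinates $X_{s,i}$ are independent Bernoulli($p_i$) variables, and $\bar X_t=(X_1+\dots+X_t)/t$; $\mathbb{P}_p$ denotes probability under this law. For $K\subseteq\mathbb{R}^n$, $\mathcal{B}_\infty(K,\epsilon)=\{x\in\mathbb{R}^n:\exists q\in K,\ \|x-q\|_\infty<\epsilon\}$. $Y_{t,\epsilon}$ is a random variable with the conditional law of $\bar X_t$ given $\bar X_t\in\mathcal{B}_\infty(K,\epsilon)$, i.e. $\mathbb{P}_p[Y_{t,\epsilon}\in A]=\mathbb{P}_p[\bar X_t\in A\mid \bar X_t\in\mathcal{B}_\infty(K,\epsilon)]$. *)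

theory Defs
  imports "HOL-Analysis.Analysis" "HOL-Probability.Probability"
begin

definition sample_pmf :: "real^'n \<Rightarrow> (real^'n) pmf" where
  "sample_pmf p =
     map_pmf (\<lambda>b. \<chi> i. if b i then 1 else 0)
       (Pi_pmf UNIV False (\<lambda>i. bernoulli_pmf (p $ i)))"

definition mean_pmf :: "real^'n \<Rightarrow> nat \<Rightarrow> (real^'n) pmf" where
  "mean_pmf p t =
     map_pmf (\<lambda>xs. (1 / real t) *\<^sub>R (\<Sum>s<t. xs s))
       (Pi_pmf {..<t} 0 (\<lambda>_. sample_pmf p))"

definition linf_dist :: "real^'n \<Rightarrow> real^'n \<Rightarrow> real" where
  "linf_dist x q = Max (range (\<lambda>i. \<bar>x $ i - q $ i\<bar>))"

definition B_inf :: "(real^'n) set \<Rightarrow> real \<Rightarrow> (real^'n) set" where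
  "B_inf K \<epsilon> = {x. \<exists>q\<in>K. linf_dist x q < \<epsilon>}"

definition unit_cube :: "(real^'n) set" where
  "unit_cube = {x. \<forall>i. 0 \<le> x $ i \<and> x $ i \<le> 1}"

text \<open>P_p[Y_{t,eps} \<in> A] = P_p[Xbar_t \<in> A | Xbar_t \<in> B_inf K eps].\<close>
definition Y_prob :: "(real^'n) set \<Rightarrow> real \<Rightarrow> real^'n \<Rightarrow> nat \<Rightarrow> (real^'n) set \<Rightarrow> real" where
  "Y_prob K \<epsilon> p t A =
     measure_pmf.prob (mean_pmf p t) (A \<inter> B_inf K \<epsilon>) / measure_pmf.prob (mean_pmf p t) (B_inf K \<epsilon>)"

end

theory Submission
  imports Defs
begin

lemma sample_component:
  fixes p :: "real^'n"
  shows "map_pmf (\<lambda>v. v $ i) (sample_pmf p) = map_pmf (\<lambda>b. if b then 1 else 0) (bernoulli_pmf (p $ i))"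
proof -
  have "map_pmf (\<lambda>v. v $ i) (sample_pmf p) =
        map_pmf (\<lambda>b. if b then 1 else 0) (map_pmf (\<lambda>f. f i) (Pi_pmf UNIV False (\<lambda>i. bernoulli_pmf (p $ i))))"
    unfolding sample_pmf_def by (simp add: pmf.map_comp o_def)
  also have "map_pmf (\<lambda>f. f i) (Pi_pmf UNIV False (\<lambda>i. bernoulli_pmf (p $ i))) = bernoulli_pmf (p $ i)"
    by (subst Pi_pmf_component) auto
  finally show ?thesis .
qed

lemma mean_component:
  fixes p :: "real^'n"
  assumes "0 \<le> p $ i" "p $ i \<le> 1"
  shows "map_pmf (\<lambda>x. x $ i) (mean_pmf p t) = map_pmf (\<lambda>k. real k / real t) (binomial_pmf t (p $ i))"
proof -
  let ?ind = "\<lambda>b. if b then 1 else (0::real)"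
  let ?coins = "Pi_pmf {..<t} False (\<lambda>_. bernoulli_pmf (p $ i))"
  have "map_pmf (\<lambda>x. x $ i) (mean_pmf p t) =
        map_pmf (\<lambda>ys. (1 / real t) * (\<Sum>s<t. ys s)) (map_pmf (\<lambda>xs. (\<lambda>v. v $ i) \<circ> xs) (Pi_pmf {..<t} 0 (\<lambda>_. sample_pmf p)))"
    unfolding mean_pmf_def by (simp add: pmf.map_comp o_def sum_component)
  also have "map_pmf (\<lambda>xs. (\<lambda>v. v $ i) \<circ> xs) (Pi_pmf {..<t} 0 (\<lambda>_. sample_pmf p))
      = Pi_pmf {..<t} 0 (\<lambda>_. map_pmf (\<lambda>v. v $ i) (sample_pmf p))"
    by (rule Pi_pmf_map[symmetric]) auto
  also have "\<dots> = Pi_pmf {..<t} 0 (\<lambda>_. map_pmf ?ind (bernoulli_pmf (p $ i)))"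
    by (simp add: sample_component)
  also have "\<dots> = map_pmf (\<lambda>h. ?ind \<circ> h) ?coins"
    by (rule Pi_pmf_map) auto
  finally have 1: "map_pmf (\<lambda>x. x $ i) (mean_pmf p t) =
      map_pmf (\<lambda>h. (1 / real t) * (\<Sum>s<t. ?ind (h s))) ?coins"
    by (simp add: pmf.map_comp o_def)
  have eq1: "(\<Sum>s<t. ?ind (x s)) = real (card {s\<in>{..<t}. x s})" for x
  proof -
    have "(\<Sum>s<t. ?ind (x s)) = (\<Sum>s\<in>{s\<in>{..<t}. x s}. 1)"
      by (intro sum.mono_neutral_cong_right) auto
    thus ?thesis by simp
  qed
  have 2: "binomial_pmf t (p $ i) = map_pmf (\<lambda>v. card {s\<in>{..<t}. v s}) ?coins"
    by (rule binomial_pmf_altdef') (use assms in auto)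
  show ?thesis unfolding 1 2 by (simp add: pmf.map_comp o_def eq1)
qed

lemma coord_tail:
  fixes p :: "real^'n"
  assumes "0 \<le> p $ i" "p $ i \<le> 1" "t > 0" "\<epsilon> \<ge> 0"
  shows "measure_pmf.prob (mean_pmf p t) {x. \<epsilon> \<le> \<bar>x $ i - p $ i\<bar>} \<le> 2 * exp (- 2 * real t * \<epsilon>^2)"
proof -
  have "measure_pmf.prob (mean_pmf p t) {x. \<epsilon> \<le> \<bar>x $ i - p $ i\<bar>}
      = measure_pmf.prob (map_pmf (\<lambda>x. x $ i) (mean_pmf p t)) {y. \<epsilon> \<le> \<bar>y - p $ i\<bar>}"
    by (simp add: measure_map_pmf vimage_def)
  also have "\<dots> = measure_pmf.prob (binomial_pmf t (p $ i)) {k. \<epsilon> \<le> \<bar>real k / real t - p $ i\<bar>}"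
    by (simp add: mean_component[OF assms(1,2)] measure_map_pmf vimage_def)
  also have "\<dots> \<le> 2 * exp (real_of_int (- 2 * int t) * \<epsilon>\<^sup>2)"
    by (rule binomial_distribution.prob_abs_ge') (use assms in \<open>auto simp: binomial_distribution_def\<close>)
  finally show ?thesis by simp
qed

theorem lemma7:
  fixes K :: "(real^'n) set" and \<epsilon> :: real and t :: nat
  assumes "compact K" and "K \<subseteq> unit_cube" and "\<epsilon> > 0"
    and "real t \<ge> ln (8 * real CARD('n)) / (2 * \<epsilon>^2)"
  shows "\<forall>p\<in>K. \<forall>A. A \<in> sets borel \<and> A \<subseteq> unit_cube \<longrightarrow>
           Y_prob K \<epsilon> p t A \<le> 2 * measure_pmf.prob (mean_pmf p t) A"
proof (intro ballI allI impI)
  fix p A assume pK: "p \<in> K"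
  let ?M = "mean_pmf p t"
  let ?B = "B_inf K \<epsilon>"
  let ?n = "real CARD('n)"
  have n1: "?n \<ge> 1" by simp
  have e2: "\<epsilon>^2 > 0" using assms(3) by simp
  have lnpos: "ln (8 * ?n) > 0" using n1 by (intro ln_gt_zero) linarith
  have tpos': "real t > 0"
    using assms(4) lnpos e2 by (smt (verit) divide_pos_pos)
  hence tpos: "t > 0" by simp
  have key: "2 * real t * \<epsilon>^2 \<ge> ln (8 * ?n)"
    using assms(4) e2 by (simp add: field_simps)
  have expb: "exp (- 2 * real t * \<epsilon>^2) \<le> 1 / (8 * ?n)"
  proof -
    have "exp (- 2 * real t * \<epsilon>^2) \<le> exp (- ln (8 * ?n))" using key by simp
    also have "\<dots> = 1 / (8 * ?n)" using n1 by (simp add: exp_minus inverse_eq_divide)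
    finally show ?thesis .
  qed
  have p01: "0 \<le> p $ i \<and> p $ i \<le> 1" for i
    using pK assms(2) unfolding unit_cube_def by auto
  have sub: "- ?B \<subseteq> (\<Union>i. {x. \<epsilon> \<le> \<bar>x $ i - p $ i\<bar>})"
  proof
    fix x assume "x \<in> - ?B"
    hence "\<not> linf_dist x p < \<epsilon>" using pK unfolding B_inf_def by auto
    moreover have "linf_dist x p \<in> range (\<lambda>i. \<bar>x $ i - p $ i\<bar>)"
      unfolding linf_dist_def by (rule Max_in) auto
    ultimately show "x \<in> (\<Union>i. {x. \<epsilon> \<le> \<bar>x $ i - p $ i\<bar>})" by (auto simp: not_less)
  qed
  have "measure_pmf.prob ?M (- ?B) \<le> measure_pmf.prob ?M (\<Union>i. {x. \<epsilon> \<le> \<bar>x $ i - p $ i\<bar>})"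
    using sub by (intro measure_pmf.finite_measure_mono) auto
  also have "\<dots> \<le> (\<Sum>i\<in>UNIV. measure_pmf.prob ?M {x. \<epsilon> \<le> \<bar>x $ i - p $ i\<bar>})"
    by (intro measure_pmf.finite_measure_subadditive_finite) auto
  also have "\<dots> \<le> (\<Sum>i\<in>(UNIV::'n set). 2 * (1 / (8 * ?n)))"
    apply (intro sum_mono)
    using coord_tail[OF _ _ tpos, of p _ \<epsilon>] p01 assms(3) expb
    by (smt (verit))
  also have "\<dots> = 1/4" using n1 by simp
  finally have cB: "measure_pmf.prob ?M (- ?B) \<le> 1/4" .
  have "measure_pmf.prob ?M (- ?B) = 1 - measure_pmf.prob ?M ?B"
    using measure_pmf.prob_compl[of ?B "mean_pmf p t"] by (simp add: Compl_eq_Diff_UNIV)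
  hence PB: "measure_pmf.prob ?M ?B \<ge> 3/4" using cB by simp
  have "measure_pmf.prob ?M (A \<inter> ?B) \<le> measure_pmf.prob ?M A"
    by (intro measure_pmf.finite_measure_mono) auto
  moreover have "measure_pmf.prob ?M A \<ge> 0" by simp
  ultimately have "measure_pmf.prob ?M (A \<inter> ?B) / measure_pmf.prob ?M ?B
      \<le> measure_pmf.prob ?M A / (3/4)"
    using PB by (intro frac_le) auto
  moreover have "measure_pmf.prob ?M A / (3/4) \<le> 2 * measure_pmf.prob ?M A"
    using \<open>measure_pmf.prob ?M A \<ge> 0\<close> by simp
  ultimately show "Y_prob K \<epsilon> p t A \<le> 2 * measure_pmf.prob ?M A"
    unfolding Y_prob_def by linarith
qed

end
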